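(* Let $h\colon R\to R'$ be a homomorphism of commutative rings with unit and let $M$ be an at most countable set of monic polynomials in $R[q]$. If $h$ is injective (resp. surjective), then so is the homomorphism $h_M\colon R[q]^M\to R'[q]^{h(M)}$ induced by the map $h_q\colon R[q]\to R'[q]$ obtained by applying $h$ to coefficients.
   Context: $q$ is an indeterminate. For a set $M$ of monic polynomials in $R[q]$, $M^*$ is the multiplicative set generated by $M$, directed by divisibility, and $R[q]^M=\varprojlim_{f\in M^*}R[q]/(f)$. $h(M)=\{h_q(f):f\in M\}$. *)

theory Defs
  imports "HOL-Computational_Algebra.Polynomial" "HOL-Library.Countable_Set"
begin

definition mstar :: "'a::comm_ring_1 poly set \<Rightarrow> 'a poly set" where
  "mstar M = {prod_list fs | fs. set fs \<subseteq> M}"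

definition pcoset :: "'a::comm_ring_1 poly \<Rightarrow> 'a poly \<Rightarrow> 'a poly set" where
  "pcoset f p = {p + f * r | r. True}"

text \<open>The quotient ring R[q]/(f), as the set of its residue classes.\<close>
definition pquot :: "'a::comm_ring_1 poly \<Rightarrow> 'a poly set set" where
  "pquot f = range (pcoset f)"

text \<open>The inverse limit R[q]^M = lim_{f in M*} R[q]/(f), M* directed by
  divisibility, with transition maps R[q]/(g) \<rightarrow> R[q]/(f) for f dvd g
  (a class of (g) is mapped to the class of (f) containing it).\<close>
definition invlim :: "'a::comm_ring_1 poly set \<Rightarrow> ('a poly \<Rightarrow> 'a poly set) set" where
  "invlim M = {\<xi>. (\<forall>f\<in>mstar M. \<xi> f \<in> pquot f)
              \<and> (\<forall>f\<in>mstar M. \<forall>g\<in>mstar M. f dvd g \<longrightarrow> \<xi> g \<subseteq> \<xi> f)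
              \<and> (\<forall>f. f \<notin> mstar M \<longrightarrow> \<xi> f = {})}"

text \<open>The homomorphism h_M : R[q]^M \<rightarrow> R'[q]^{h(M)} induced by the maps
  R[q]/(f) \<rightarrow> R'[q]/(h_q f), p mod f \<mapsto> h_q(p) mod h_q(f), where h_q = map_poly h.
  The component at g is the class of h_q(p) mod g for any p in the component of
  the family at any f in M* with h_q f = g (all these classes coincide).\<close>
definition hM :: "('a::comm_ring_1 \<Rightarrow> 'b::comm_ring_1) \<Rightarrow> 'a poly set
                  \<Rightarrow> ('a poly \<Rightarrow> 'a poly set) \<Rightarrow> ('b poly \<Rightarrow> 'b poly set)" where
  "hM h M \<xi> = (\<lambda>g. \<Union>{pcoset g (map_poly h p) | p f. f \<in> mstar M \<and> map_poly h f = g \<and> p \<in> \<xi> f})"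

end

theory Submission
  imports Defs
begin

lemma pcoset_mem: "x \<in> pcoset f p \<longleftrightarrow> f dvd x - p"
proof
  assume "x \<in> pcoset f p"
  then obtain r where "x = p + f * r" unfolding pcoset_def by auto
  then have "x - p = f * r" by simp
  then show "f dvd x - p" by (rule dvdI)
next
  assume "f dvd x - p"
  then obtain r where "x - p = f * r" by (auto elim: dvdE)
  then have "x = p + f * r" by (metis add.commute diff_add_cancel)
  then show "x \<in> pcoset f p" unfolding pcoset_def by auto
qed

lemma pcoset_self: "p \<in> pcoset f p"
  by (simp add: pcoset_mem)

lemma pcoset_eq: "pcoset f p = pcoset f q \<longleftrightarrow> f dvd p - q"
proof
  assume "pcoset f p = pcoset f q"
  then show "f dvd p - q" using pcoset_self[of p f] by (simp add: pcoset_mem)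
next
  assume a: "f dvd p - q"
  show "pcoset f p = pcoset f q"
  proof (intro set_eqI iffI)
    fix x assume "x \<in> pcoset f p"
    then have "f dvd (x - p) + (p - q)" using a by (intro dvd_add) (simp_all add: pcoset_mem)
    moreover have "(x - p) + (p - q) = x - q" by simp
    ultimately show "x \<in> pcoset f q" by (simp add: pcoset_mem)
  next
    fix x assume "x \<in> pcoset f q"
    then have "f dvd (x - q) - (p - q)" using a dvd_diff[of f "x - q" "p - q"] by (simp add: pcoset_mem)
    moreover have "(x - q) - (p - q) = x - p" by simp
    ultimately show "x \<in> pcoset f p" by (simp add: pcoset_mem)
  qed
qed

lemma pquot_mem: "S \<in> pquot f \<Longrightarrow> x \<in> S \<Longrightarrow> S = pcoset f x"
  unfolding pquot_def
proof -
  assume "S \<in> range (pcoset f)" "x \<in> S"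
  then obtain p where S: "S = pcoset f p" by auto
  with \<open>x \<in> S\<close> have "f dvd x - p" by (simp add: pcoset_mem)
  then show "S = pcoset f x" using S pcoset_eq by metis
qed

lemma pcoset_mono: "f dvd g \<Longrightarrow> pcoset g p \<subseteq> pcoset f p"
  by (auto simp: pcoset_mem intro: dvd_trans)

lemma mstar_one: "1 \<in> mstar M"
  unfolding mstar_def by (rule CollectI, rule exI[of _ "[]"]) simp

lemma mstar_mult: "f \<in> mstar M \<Longrightarrow> g \<in> mstar M \<Longrightarrow> f * g \<in> mstar M"
  unfolding mstar_def
proof -
  assume "f \<in> {prod_list fs |fs. set fs \<subseteq> M}" "g \<in> {prod_list fs |fs. set fs \<subseteq> M}"
  then obtain fs gs where "f = prod_list fs" "set fs \<subseteq> M" "g = prod_list gs" "set gs \<subseteq> M" by auto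
  then show "f * g \<in> {prod_list fs |fs. set fs \<subseteq> M}"
    by (intro CollectI exI[of _ "fs @ gs"]) auto
qed

lemma monic_mult_degree:
  fixes p q :: "'a::comm_ring_1 poly"
  assumes "lead_coeff p = 1" "q \<noteq> 0"
  shows "degree (p * q) = degree p + degree q \<and> lead_coeff (p * q) = lead_coeff q"
proof -
  have c: "coeff (p * q) (degree p + degree q) = lead_coeff q"
    using coeff_mult_degree_sum[of p q] assms by simp
  have "lead_coeff q \<noteq> 0" using assms by simp
  then have "degree p + degree q \<le> degree (p * q)" using c le_degree by metis
  with degree_mult_le[of p q] have "degree (p * q) = degree p + degree q" by linarith
  then show ?thesis using c by simp
qed

lemma monic_mult:
  fixes p q :: "'a::comm_ring_1 poly"
  assumes "lead_coeff p = 1" "lead_coeff q = 1"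
  shows "lead_coeff (p * q) = 1"
proof -
  have "q \<noteq> 0" using assms by auto
  have "lead_coeff (p * q) = lead_coeff q" using monic_mult_degree[OF assms(1) \<open>q \<noteq> 0\<close>] by (rule conjunct2)
  then show ?thesis using assms(2) by (rule trans)
qed

lemma mstar_monic:
  fixes M :: "'a::comm_ring_1 poly set"
  assumes "\<forall>f\<in>M. lead_coeff f = 1" "f \<in> mstar M"
  shows "lead_coeff f = 1"
proof -
  obtain fs where "f = prod_list fs" "set fs \<subseteq> M" using assms(2) unfolding mstar_def by auto
  moreover have "set fs \<subseteq> M \<Longrightarrow> lead_coeff (prod_list fs) = 1" for fs
    by (induction fs) (use assms(1) monic_mult in auto)
  ultimately show ?thesis by simp
qed

lemma invlim_D:
  assumes "\<xi> \<in> invlim M"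
  shows "\<And>f. f \<in> mstar M \<Longrightarrow> \<xi> f \<in> pquot f"
    and "\<And>f g. f \<in> mstar M \<Longrightarrow> g \<in> mstar M \<Longrightarrow> f dvd g \<Longrightarrow> \<xi> g \<subseteq> \<xi> f"
    and "\<And>f. f \<notin> mstar M \<Longrightarrow> \<xi> f = {}"
  using assms unfolding invlim_def mem_Collect_eq by metis+

lemma invlim_coset: "\<xi> \<in> invlim M \<Longrightarrow> f \<in> mstar M \<Longrightarrow> p \<in> \<xi> f \<Longrightarrow> \<xi> f = pcoset f p"
  by (rule pquot_mem) (rule invlim_D(1))

lemma invlim_ne: "\<xi> \<in> invlim M \<Longrightarrow> f \<in> mstar M \<Longrightarrow> \<exists>r. r \<in> \<xi> f"
proof -
  assume "\<xi> \<in> invlim M" "f \<in> mstar M"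
  then have "\<xi> f \<in> pquot f" by (rule invlim_D(1))
  then obtain p where "\<xi> f = pcoset f p" unfolding pquot_def by auto
  then show ?thesis using pcoset_self by metis
qed

lemma invlim_sub: "\<xi> \<in> invlim M \<Longrightarrow> f \<in> mstar M \<Longrightarrow> g \<in> mstar M \<Longrightarrow> f dvd g \<Longrightarrow> \<xi> g \<subseteq> \<xi> f"
  by (rule invlim_D(2))

lemma invlim_out: "\<xi> \<in> invlim M \<Longrightarrow> f \<notin> mstar M \<Longrightarrow> \<xi> f = {}"
  by (rule invlim_D(3))

lemma map_list_ex: "set ys \<subseteq> f ` A \<Longrightarrow> \<exists>xs. ys = map f xs \<and> set xs \<subseteq> A"
proof (induction ys)
  case Nil then show ?case by simp
next
  case (Cons y ys)
  then obtain x where "x \<in> A" "y = f x" by auto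
  moreover obtain xs where "ys = map f xs" "set xs \<subseteq> A" using Cons by auto
  ultimately show ?case by (intro exI[of _ "x # xs"]) auto
qed

locale rh =
  fixes h :: "'a::comm_ring_1 \<Rightarrow> 'b::comm_ring_1"
  assumes one: "h 1 = 1" and add: "\<And>x y. h (x + y) = h x + h y"
    and mult: "\<And>x y. h (x * y) = h x * h y"
begin

lemma zero[simp]: "h 0 = 0"
  using add[of 0 0] by simp

lemma neg: "h (- x) = - h x"
proof -
  have "h x + h (- x) = 0" using add[of x "-x"] by simp
  then show ?thesis by (metis minus_unique)
qed

lemma diff: "h (x - y) = h x - h y"
  using add[of x "-y"] neg[of y] by simp

lemma hsum: "h (sum f A) = (\<Sum>a\<in>A. h (f a))"
  by (induction A rule: infinite_finite_induct) (auto simp: add)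

abbreviation hq where "hq \<equiv> map_poly h"

lemma coeff_hq[simp]: "coeff (hq p) n = h (coeff p n)"
  by (simp add: coeff_map_poly)

lemma hq_add: "hq (p + q) = hq p + hq q"
  by (rule poly_eqI) (simp add: add)

lemma hq_diff: "hq (p - q) = hq p - hq q"
  by (rule poly_eqI) (simp add: diff)

lemma hq_mult: "hq (p * q) = hq p * hq q"
  by (rule poly_eqI) (simp add: coeff_mult hsum mult)

lemma hq_one: "hq 1 = 1"
  by (simp add: one)

lemma hq_dvd: "a dvd b \<Longrightarrow> hq a dvd hq b"
  by (auto simp: dvd_def hq_mult)

lemma hq_prod_list: "hq (prod_list fs) = prod_list (map hq fs)"
  by (induction fs) (auto simp: hq_one hq_mult)

lemma mstar_image: "mstar (hq ` M) = hq ` mstar M"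
proof (intro set_eqI iffI)
  fix g assume "g \<in> mstar (hq ` M)"
  then obtain gs where g: "g = prod_list gs" "set gs \<subseteq> hq ` M" unfolding mstar_def by auto
  then obtain fs where "gs = map hq fs" "set fs \<subseteq> M" using map_list_ex by metis
  then show "g \<in> hq ` mstar M" using g unfolding mstar_def
    by (intro image_eqI[where x="prod_list fs"]) (auto simp: hq_prod_list)
next
  fix g assume "g \<in> hq ` mstar M"
  then obtain fs where g: "g = hq (prod_list fs)" "set fs \<subseteq> M" unfolding mstar_def by auto
  then show "g \<in> mstar (hq ` M)" unfolding mstar_def
    by (intro CollectI exI[of _ "map hq fs"]) (auto simp: hq_prod_list)
qed

lemma hM_at:
  assumes xi: "\<xi> \<in> invlim M" and f: "f \<in> mstar M" and p: "p \<in> \<xi> f"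
  shows "hM h M \<xi> (hq f) = pcoset (hq f) (hq p)"
  unfolding hM_def
proof (intro equalityI subsetI)
  fix x assume "x \<in> pcoset (hq f) (hq p)"
  then show "x \<in> \<Union> {pcoset (hq f) (hq p) |p fa. fa \<in> mstar M \<and> hq fa = hq f \<and> p \<in> \<xi> fa}"
    using f p by blast
next
  fix x assume "x \<in> \<Union> {pcoset (hq f) (hq p) |p fa. fa \<in> mstar M \<and> hq fa = hq f \<and> p \<in> \<xi> fa}"
  then obtain p' f' where f': "f' \<in> mstar M" "hq f' = hq f" "p' \<in> \<xi> f'" and x: "x \<in> pcoset (hq f) (hq p')"
    by blast
  have ff: "f * f' \<in> mstar M" using f f' mstar_mult by blast
  obtain r where r: "r \<in> \<xi> (f * f')" using invlim_ne[OF xi ff] by blast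
  have r1: "r \<in> \<xi> f" using invlim_sub[OF xi f ff] r by auto
  have r2: "r \<in> \<xi> f'" using invlim_sub[OF xi f'(1) ff] r by auto
  have "f dvd p - r" using invlim_coset[OF xi f r1] p by (simp add: pcoset_mem)
  then have d1: "hq f dvd hq p - hq r" using hq_dvd hq_diff by metis
  have "f' dvd p' - r" using invlim_coset[OF xi f'(1) r2] f'(3) by (simp add: pcoset_mem)
  then have d2: "hq f dvd hq p' - hq r" using hq_dvd hq_diff f'(2) by metis
  have d3: "hq f dvd x - hq p'" using x by (simp add: pcoset_mem)
  have "hq f dvd (x - hq p') + (hq p' - hq r) - (hq p - hq r)"
    using dvd_diff[OF dvd_add[OF d3 d2] d1] .
  moreover have "(x - hq p') + (hq p' - hq r) - (hq p - hq r) = x - hq p" by simp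
  ultimately show "x \<in> pcoset (hq f) (hq p)" by (simp only: pcoset_mem)
qed

lemma hM_out: "g \<notin> hq ` mstar M \<Longrightarrow> hM h M \<xi> g = {}"
  unfolding hM_def by blast

lemma hM_in:
  assumes xi: "\<xi> \<in> invlim M"
  shows "hM h M \<xi> \<in> invlim (hq ` M)"
  unfolding invlim_def mstar_image
proof (intro CollectI conjI ballI allI impI)
  fix g assume "g \<in> hq ` mstar M"
  then obtain f where f: "f \<in> mstar M" "g = hq f" by auto
  obtain p where "p \<in> \<xi> f" using invlim_ne[OF xi f(1)] by blast
  then show "hM h M \<xi> g \<in> pquot g" using hM_at[OF xi f(1)] f unfolding pquot_def by auto
next
  fix g1 g2 assume g: "g1 \<in> hq ` mstar M" "g2 \<in> hq ` mstar M" "g1 dvd g2"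
  then obtain f1 f2 where f: "f1 \<in> mstar M" "g1 = hq f1" "f2 \<in> mstar M" "g2 = hq f2" by auto
  have ff: "f1 * f2 \<in> mstar M" using f mstar_mult by blast
  obtain r where r: "r \<in> \<xi> (f1 * f2)" using invlim_ne[OF xi ff] by blast
  have r1: "r \<in> \<xi> f1" using invlim_sub[OF xi f(1) ff] r by auto
  have r2: "r \<in> \<xi> f2" using invlim_sub[OF xi f(3) ff] r by auto
  show "hM h M \<xi> g2 \<subseteq> hM h M \<xi> g1"
    using hM_at[OF xi f(1) r1] hM_at[OF xi f(3) r2] f pcoset_mono[OF g(3)] by simp
next
  fix g assume "g \<notin> hq ` mstar M"
  then show "hM h M \<xi> g = {}" by (rule hM_out)
qed

lemma inj_dvd:
  assumes inj: "inj h" and monic: "lead_coeff f = 1" and dv: "hq f dvd hq d"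
  shows "f dvd d"
proof -
  have nz: "x \<noteq> 0 \<Longrightarrow> h x \<noteq> 0" for x using inj zero by (metis injD)
  have f0: "f \<noteq> 0" using monic by auto
  obtain q r where qr: "pseudo_divmod d f = (q, r)" by (cases "pseudo_divmod d f") auto
  have eq: "d = f * q + r" using pseudo_divmod(1)[OF f0 qr] monic by simp
  have rdeg: "r = 0 \<or> degree r < degree f" using pseudo_divmod(2)[OF f0 qr] .
  have "hq d = hq f * hq q + hq r" using eq hq_add hq_mult by metis
  then have "hq r = hq d - hq f * hq q" by simp
  then have dr: "hq f dvd hq r" using dv by (simp add: dvd_diff)
  have degq: "degree (hq p) = degree p" for p by (rule degree_map_poly) (rule nz)
  have lf: "lead_coeff (hq f) = 1" using monic degq[of f] by (simp add: one)
  have "r = 0"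
  proof (rule ccontr)
    assume r0: "r \<noteq> 0"
    then have "hq r \<noteq> 0" by (metis degq coeff_hq degree_0 leading_coeff_0_iff nz)
    moreover obtain t where t: "hq r = hq f * t" using dr by (auto simp: dvd_def)
    ultimately have "t \<noteq> 0" by auto
    then have "degree (hq r) = degree (hq f) + degree t" using monic_mult_degree[OF lf] t by simp
    then show False using rdeg r0 degq by simp
  qed
  then show ?thesis using eq by simp
qed

lemma hq_surj:
  assumes "surj h"
  shows "\<exists>s. hq s = t"
proof -
  define g where "g = (\<lambda>x. if x = 0 then 0 else (SOME y. h y = x))"
  have hg: "h (g x) = x" for x
  proof (cases "x = 0")
    case False
    obtain y where "h y = x" using assms by (metis surjD)
    then show ?thesis using False unfolding g_def by (metis (mono_tags, lifting) someI)
  qed (simp add: g_def)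
  have "g 0 = 0" by (simp add: g_def)
  then have "hq (map_poly g t) = t" by (intro poly_eqI) (simp add: coeff_map_poly hg)
  then show ?thesis by blast
qed

lemma surj_part:
  assumes surj: "surj h" and cnt: "countable M" and eta: "\<eta> \<in> invlim (hq ` M)"
  shows "\<exists>\<xi>\<in>invlim M. hM h M \<xi> = \<eta>"
proof -
  have eqM: "mstar M = prod_list ` lists M" unfolding mstar_def lists_eq_set by auto
  have cM: "countable (mstar M)" unfolding eqM using cnt by simp
  have ne: "mstar M \<noteq> {}" using mstar_one by blast
  define e where "e = from_nat_into (mstar M)"
  have e_in: "e n \<in> mstar M" for n unfolding e_def using from_nat_into[OF ne] .
  have e_surj: "f \<in> mstar M \<Longrightarrow> \<exists>n. e n = f" for f
    unfolding e_def using from_nat_into_to_nat_on[OF cM] by blast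
  define F where "F n = (\<Prod>i\<le>n. e i)" for n
  have F_in: "F n \<in> mstar M" for n
  proof (induction n)
    case 0 then show ?case using e_in by (simp add: F_def)
  next
    case (Suc n)
    have "F (Suc n) = F n * e (Suc n)" by (simp add: F_def)
    then show ?case using mstar_mult[OF Suc e_in] by simp
  qed
  have e_dvd: "k \<le> n \<Longrightarrow> e k dvd F n" for k n unfolding F_def by (intro dvd_prodI) auto
  have F_mono: "n \<le> m \<Longrightarrow> F n dvd F m" for n m unfolding F_def
    by (intro prod_dvd_prod_subset) auto
  define G where "G n = hq (F n)" for n
  have G_in: "G n \<in> mstar (hq ` M)" for n unfolding G_def mstar_image using F_in by blast
  have "\<forall>n. \<exists>c. c \<in> \<eta> (G n)" using invlim_ne[OF eta G_in] by blast
  then obtain c where c: "\<And>n. c n \<in> \<eta> (G n)" by metis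
  have cc: "G n dvd c (Suc n) - c n" for n
  proof -
    have "G n dvd G (Suc n)" unfolding G_def by (intro hq_dvd F_mono) simp
    then have "\<eta> (G (Suc n)) \<subseteq> \<eta> (G n)" using invlim_sub[OF eta G_in G_in] by blast
    then have "c (Suc n) \<in> pcoset (G n) (c n)" using c invlim_coset[OF eta G_in c] by blast
    then show ?thesis by (simp add: pcoset_mem)
  qed
  have "\<exists>p. \<forall>n. G n dvd hq (p n) - c n \<and> F n dvd p (Suc n) - p n"
  proof (rule dependent_nat_choice)
    obtain s where "hq s = c 0" using hq_surj[OF surj] by blast
    then have "G 0 dvd hq s - c 0" by simp
    then show "\<exists>x. G 0 dvd hq x - c 0" by blast
  next
    fix x n assume a: "G n dvd hq x - c n"
    have "G n dvd (c (Suc n) - c n) - (hq x - c n)" using dvd_diff[OF cc a] .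
    moreover have "(c (Suc n) - c n) - (hq x - c n) = c (Suc n) - hq x" by simp
    ultimately have "G n dvd c (Suc n) - hq x" by (simp only:)
    then obtain t where t: "c (Suc n) - hq x = G n * t" by (auto simp: dvd_def)
    obtain s where s: "hq s = t" using hq_surj[OF surj] by blast
    have "hq (x + F n * s) = c (Suc n)" using t s by (simp add: hq_add hq_mult G_def algebra_simps)
    then show "\<exists>y. G (Suc n) dvd hq y - c (Suc n) \<and> F n dvd y - x"
      by (intro exI[of _ "x + F n * s"]) simp
  qed
  then obtain p where p: "\<And>n. G n dvd hq (p n) - c n" "\<And>n. F n dvd p (Suc n) - p n" by blast
  have pd: "n \<le> m \<Longrightarrow> F n dvd p m - p n" for n m
  proof (induction m rule: dec_induct)
    case base then show ?case by simp
  next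
    case (step m)
    have "F n dvd p (Suc m) - p m" using p(2) F_mono[OF step(1)] dvd_trans by blast
    then have "F n dvd (p (Suc m) - p m) + (p m - p n)" using step(3) by (rule dvd_add)
    moreover have "(p (Suc m) - p m) + (p m - p n) = p (Suc m) - p n" by simp
    ultimately show ?case by (simp only:)
  qed
  have pd2: "f dvd F n \<Longrightarrow> f dvd F m \<Longrightarrow> f dvd p n - p m" for f n m
  proof (cases "n \<le> m")
    case True
    assume "f dvd F n"
    then have "f dvd p m - p n" using pd[OF True] dvd_trans by blast
    then show ?thesis by (metis dvd_minus_iff minus_diff_eq)
  next
    case False
    assume "f dvd F m"
    then show ?thesis using pd[of m n] False dvd_trans by fastforce
  qed
  have ex_n: "f \<in> mstar M \<Longrightarrow> \<exists>n. f dvd F n" for f using e_surj e_dvd by blast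
  define \<xi> where "\<xi> f = (if f \<in> mstar M then pcoset f (p (SOME n. f dvd F n)) else {})" for f
  have xi_at: "f \<in> mstar M \<Longrightarrow> f dvd F n \<Longrightarrow> \<xi> f = pcoset f (p n)" for f n
  proof -
    assume f: "f \<in> mstar M" "f dvd F n"
    have "f dvd F (SOME n. f dvd F n)" using someI_ex[OF ex_n[OF f(1)]] .
    then have "f dvd p (SOME n. f dvd F n) - p n" using pd2 f(2) by blast
    then show ?thesis using f(1) unfolding \<xi>_def by (simp add: pcoset_eq)
  qed
  have xi_in: "\<xi> \<in> invlim M"
    unfolding invlim_def
  proof (intro CollectI conjI ballI allI impI)
    fix f assume f: "f \<in> mstar M"
    then obtain n where "f dvd F n" using ex_n by blast
    then show "\<xi> f \<in> pquot f" using xi_at f unfolding pquot_def by auto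
  next
    fix f g assume fg: "f \<in> mstar M" "g \<in> mstar M" "f dvd g"
    then obtain n where n: "g dvd F n" using ex_n by blast
    then have "f dvd F n" using fg(3) dvd_trans by blast
    then show "\<xi> g \<subseteq> \<xi> f" using xi_at fg n pcoset_mono by metis
  next
    fix f assume "f \<notin> mstar M" then show "\<xi> f = {}" unfolding \<xi>_def by simp
  qed
  have "hM h M \<xi> = \<eta>"
  proof
    fix g
    show "hM h M \<xi> g = \<eta> g"
    proof (cases "g \<in> hq ` mstar M")
      case True
      then obtain f where f: "f \<in> mstar M" "g = hq f" by auto
      then obtain n where n: "f dvd F n" using ex_n by blast
      have pn: "p n \<in> \<xi> f" using xi_at[OF f(1) n] pcoset_self by blast
      have h1: "hM h M \<xi> g = pcoset g (hq (p n))" using hM_at[OF xi_in f(1) pn] f by simp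
      have gG: "g dvd G n" unfolding G_def f using hq_dvd n by blast
      have gin: "g \<in> mstar (hq ` M)" using True mstar_image by blast
      have "\<eta> (G n) \<subseteq> \<eta> g" using invlim_sub[OF eta gin G_in gG] .
      then have "c n \<in> \<eta> g" using c by blast
      then have h2: "\<eta> g = pcoset g (c n)" using invlim_coset[OF eta gin] by blast
      have "g dvd hq (p n) - c n" using gG p(1) dvd_trans by blast
      then show ?thesis using h1 h2 by (simp add: pcoset_eq)
    next
      case False
      then have "g \<notin> mstar (hq ` M)" using mstar_image by blast
      then show ?thesis using hM_out[OF False] invlim_out[OF eta] by simp
    qed
  qed
  then show ?thesis using xi_in by blast
qed

end

theorem lemma3p1:
  fixes h :: "'a::comm_ring_1 \<Rightarrow> 'b::comm_ring_1"
    and M :: "'a poly set"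
  assumes hom_one: "h 1 = 1"
    and hom_add: "\<And>x y. h (x + y) = h x + h y"
    and hom_mult: "\<And>x y. h (x * y) = h x * h y"
    and monic: "\<forall>f\<in>M. lead_coeff f = 1"
    and cnt: "countable M"
  shows "(inj h \<longrightarrow> inj_on (hM h M) (invlim M))
       \<and> (surj h \<longrightarrow> hM h M ` invlim M = invlim (map_poly h ` M))"
proof -
  interpret rh h using hom_one hom_add hom_mult by unfold_locales
  have A: "inj_on (hM h M) (invlim M)" if inj: "inj h"
  proof (rule inj_onI)
    fix \<xi> \<xi>' assume xi: "\<xi> \<in> invlim M" "\<xi>' \<in> invlim M" and eq: "hM h M \<xi> = hM h M \<xi>'"
    show "\<xi> = \<xi>'"
    proof
      fix f
      show "\<xi> f = \<xi>' f"
      proof (cases "f \<in> mstar M")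
        case True
        obtain p where p: "p \<in> \<xi> f" using invlim_ne[OF xi(1) True] by blast
        obtain p' where p': "p' \<in> \<xi>' f" using invlim_ne[OF xi(2) True] by blast
        have "pcoset (hq f) (hq p) = pcoset (hq f) (hq p')"
          using hM_at[OF xi(1) True p] hM_at[OF xi(2) True p'] eq by simp
        then have "hq f dvd hq (p - p')" by (simp add: pcoset_eq hq_diff)
        then have "f dvd p - p'" using inj_dvd[OF inj mstar_monic[OF monic True]] by blast
        then show ?thesis using invlim_coset[OF xi(1) True p] invlim_coset[OF xi(2) True p']
          by (simp add: pcoset_eq)
      next
        case False
        then show ?thesis using invlim_out xi by metis
      qed
    qed
  qed
  have B: "hM h M ` invlim M = invlim (map_poly h ` M)" if surj: "surj h"
    using hM_in surj_part[OF surj cnt] by blast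
  show ?thesis using A B by blast
qed

end
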